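(* Let $A$ be a T-brace. If the additive group of the $\star$-center $\zeta(\star,A)$ of $A$ is torsion-free, then the upper $\star$-hypercenter $\zeta_\infty(\star,A)$ of $A$ coincides with $\zeta(\star,A)$.
   Context: A (left) brace is a set $A$ with two operations $+$ and $\cdot$ such that $(A,+)$ is an abelian group, $(A,\cdot)$ is a group, and $a(b+c)=ab+ac-a$ for all $a,b,c\in A$; the identities of both groups coincide (denoted $0$). Put $a\star b=ab-a-b$. A subbrace is a subset which is a subgroup of both $(A,+)$ and $(A,\cdot)$. A subbrace $L$ is an ideal of $A$ if $a\star z\in L$ and $z\star a\in L$ for all $a\in A$, $z\in L$; then the quotient brace $A/L$ is defined naturally. A brace $A$ is a T-brace if being an ideal is transitive: whenever $I$ is an ideal of $J$ and $J$ is an ideal of $A$, $I$ is an ideal of $A$. The $\star$-center is $\zeta(\star,A)=\{a\in A: a\star x=x\star a=0 \text{ for all } x\in A\}$, an ideal of $A$. The upper $\star$-central series is defined by $\zeta_0(\star,A)=0$, $\zeta_1(\star,A)=\zeta(\star,A)$, $\zeta_{\alpha+1}(\star,A)/\zeta_\alpha(\star,A)=\zeta(\star,A/\zeta_\alpha(\star,A))$, and $\zeta_\lambda(\star,A)=\bigcup_{\mu<\lambda}\zeta_\mu(\star,A)$ for limit ordinals $\lambda$; its last term $\zeta_\infty(\star,A)$ is the upper $\star$-hypercenter. *)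

theory Defs
  imports Main
begin

record 'a brace_str =
  carrier :: "'a set"
  add :: "'a \<Rightarrow> 'a \<Rightarrow> 'a"
  neg :: "'a \<Rightarrow> 'a"
  mul :: "'a \<Rightarrow> 'a \<Rightarrow> 'a"
  zero :: 'a

definition is_brace :: "('a, 'b) brace_str_scheme \<Rightarrow> bool" where
  "is_brace A \<longleftrightarrow>
     zero A \<in> carrier A \<and>
     (\<forall>a\<in>carrier A. \<forall>b\<in>carrier A. add A a b \<in> carrier A) \<and>
     (\<forall>a\<in>carrier A. neg A a \<in> carrier A) \<and>
     (\<forall>a\<in>carrier A. \<forall>b\<in>carrier A. mul A a b \<in> carrier A) \<and>
     (\<forall>a\<in>carrier A. \<forall>b\<in>carrier A. \<forall>c\<in>carrier A. add A (add A a b) c = add A a (add A b c)) \<and>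
     (\<forall>a\<in>carrier A. \<forall>b\<in>carrier A. add A a b = add A b a) \<and>
     (\<forall>a\<in>carrier A. add A a (zero A) = a) \<and>
     (\<forall>a\<in>carrier A. add A a (neg A a) = zero A) \<and>
     (\<forall>a\<in>carrier A. \<forall>b\<in>carrier A. \<forall>c\<in>carrier A. mul A (mul A a b) c = mul A a (mul A b c)) \<and>
     (\<forall>a\<in>carrier A. mul A a (zero A) = a \<and> mul A (zero A) a = a) \<and>
     (\<forall>a\<in>carrier A. \<exists>b\<in>carrier A. mul A a b = zero A \<and> mul A b a = zero A) \<and>
     (\<forall>a\<in>carrier A. \<forall>b\<in>carrier A. \<forall>c\<in>carrier A.
        mul A a (add A b c) = add A (add A (mul A a b) (mul A a c)) (neg A a))"

definition star :: "('a, 'b) brace_str_scheme \<Rightarrow> 'a \<Rightarrow> 'a \<Rightarrow> 'a" where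
  "star A a b = add A (add A (mul A a b) (neg A a)) (neg A b)"

definition subbrace :: "('a, 'b) brace_str_scheme \<Rightarrow> 'a set \<Rightarrow> bool" where
  "subbrace A L \<longleftrightarrow> L \<subseteq> carrier A \<and> zero A \<in> L \<and>
     (\<forall>a\<in>L. \<forall>b\<in>L. add A a b \<in> L) \<and> (\<forall>a\<in>L. neg A a \<in> L) \<and>
     (\<forall>a\<in>L. \<forall>b\<in>L. mul A a b \<in> L) \<and>
     (\<forall>a\<in>L. \<exists>b\<in>L. mul A a b = zero A \<and> mul A b a = zero A)"

definition brace_ideal :: "('a, 'b) brace_str_scheme \<Rightarrow> 'a set \<Rightarrow> bool" where
  "brace_ideal A L \<longleftrightarrow> subbrace A L \<and>
     (\<forall>a\<in>carrier A. \<forall>z\<in>L. star A a z \<in> L \<and> star A z a \<in> L)"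

text \<open>T-brace: being an ideal is transitive. An ideal I of the subbrace J is an
  ideal of the brace with carrier J and the restricted operations.\<close>
definition T_brace :: "('a, 'b) brace_str_scheme \<Rightarrow> bool" where
  "T_brace A \<longleftrightarrow> is_brace A \<and>
     (\<forall>I J. brace_ideal (A\<lparr>carrier := J\<rparr>) I \<longrightarrow> brace_ideal A J \<longrightarrow> brace_ideal A I)"

definition star_center :: "('a, 'b) brace_str_scheme \<Rightarrow> 'a set" where
  "star_center A = {a \<in> carrier A. \<forall>x\<in>carrier A. star A a x = zero A \<and> star A x a = zero A}"

definition nat_smul :: "('a, 'b) brace_str_scheme \<Rightarrow> nat \<Rightarrow> 'a \<Rightarrow> 'a" where
  "nat_smul A n a = (add A a ^^ n) (zero A)"

definition add_torsion_free :: "('a, 'b) brace_str_scheme \<Rightarrow> 'a set \<Rightarrow> bool" where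
  "add_torsion_free A L \<longleftrightarrow> (\<forall>z\<in>L. \<forall>n::nat. n > 0 \<longrightarrow> nat_smul A n z = zero A \<longrightarrow> z = zero A)"

text \<open>Preimage in A of the star-center of the quotient A/Z:
  (a+Z) star (x+Z) = (a star x) + Z, so a+Z is star-central in A/Z iff
  a star x and x star a lie in Z for all x.\<close>
definition center_step :: "('a, 'b) brace_str_scheme \<Rightarrow> 'a set \<Rightarrow> 'a set" where
  "center_step A Z = {a \<in> carrier A. \<forall>x\<in>carrier A. star A a x \<in> Z \<and> star A x a \<in> Z}"

text \<open>Upper star-hypercenter: the union of the transfinite upper star-central series,
  i.e. the least set containing 0 that is closed under the step
  zeta_(alpha+1) = preimage of the star-center of A / zeta_alpha.\<close>
inductive_set star_hypercenter :: "('a, 'b) brace_str_scheme \<Rightarrow> 'a set"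
  for A :: "('a, 'b) brace_str_scheme" where
  base: "zero A \<in> star_hypercenter A"
| step: "a \<in> carrier A \<Longrightarrow> (\<And>x. x \<in> carrier A \<Longrightarrow> star A a x \<in> star_hypercenter A \<and> star A x a \<in> star_hypercenter A)
          \<Longrightarrow> a \<in> star_hypercenter A"

end

theory Submission
  imports Defs
begin

locale brace =
  fixes A :: "('a, 'b) brace_str_scheme"
  assumes br: "is_brace A"
begin

abbreviation G where "G \<equiv> carrier A"
abbreviation pl (infixl "\<oplus>" 65) where "x \<oplus> y \<equiv> add A x y"
abbreviation ng where "ng x \<equiv> neg A x"
abbreviation ml (infixl "\<otimes>" 70) where "x \<otimes> y \<equiv> mul A x y"
abbreviation st (infixl "\<star>" 70) where "x \<star> y \<equiv> star A x y"
abbreviation z0 ("\<zero>") where "\<zero> \<equiv> zero A"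

lemma zero_closed[simp]: "\<zero> \<in> G" using br unfolding is_brace_def by blast
lemma add_closed[simp]: "x \<in> G \<Longrightarrow> y \<in> G \<Longrightarrow> x \<oplus> y \<in> G" using br unfolding is_brace_def by blast
lemma neg_closed[simp]: "x \<in> G \<Longrightarrow> ng x \<in> G" using br unfolding is_brace_def by blast
lemma mul_closed[simp]: "x \<in> G \<Longrightarrow> y \<in> G \<Longrightarrow> x \<otimes> y \<in> G" using br unfolding is_brace_def by blast
lemma add_assoc: "x \<in> G \<Longrightarrow> y \<in> G \<Longrightarrow> z \<in> G \<Longrightarrow> x \<oplus> y \<oplus> z = x \<oplus> (y \<oplus> z)"
  using br unfolding is_brace_def by blast
lemma add_comm: "x \<in> G \<Longrightarrow> y \<in> G \<Longrightarrow> x \<oplus> y = y \<oplus> x"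
  using br unfolding is_brace_def by blast
lemma add_left_comm: "x \<in> G \<Longrightarrow> y \<in> G \<Longrightarrow> z \<in> G \<Longrightarrow> x \<oplus> (y \<oplus> z) = y \<oplus> (x \<oplus> z)"
proof -
  assume h: "x \<in> G" "y \<in> G" "z \<in> G"
  have "x \<oplus> (y \<oplus> z) = x \<oplus> y \<oplus> z" using h by (simp add: add_assoc)
  also have "x \<oplus> y = y \<oplus> x" using h(1,2) by (rule add_comm)
  also have "y \<oplus> x \<oplus> z = y \<oplus> (x \<oplus> z)" using h by (simp add: add_assoc)
  finally show ?thesis .
qed
lemmas add_ac = add_assoc add_comm add_left_comm
lemma add_zero[simp]: "x \<in> G \<Longrightarrow> x \<oplus> \<zero> = x" using br unfolding is_brace_def by blast
lemma zero_add[simp]: "x \<in> G \<Longrightarrow> \<zero> \<oplus> x = x" by (subst add_comm) simp_all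
lemma add_neg[simp]: "x \<in> G \<Longrightarrow> x \<oplus> ng x = \<zero>" using br unfolding is_brace_def by blast
lemma neg_add_self[simp]: "x \<in> G \<Longrightarrow> ng x \<oplus> x = \<zero>" by (subst add_comm) simp_all
lemma add_neg_cancel[simp]: "x \<in> G \<Longrightarrow> y \<in> G \<Longrightarrow> x \<oplus> (ng x \<oplus> y) = y"
  by (simp add: add_assoc[symmetric])
lemma neg_add_cancel[simp]: "x \<in> G \<Longrightarrow> y \<in> G \<Longrightarrow> ng x \<oplus> (x \<oplus> y) = y"
  by (simp add: add_assoc[symmetric])
lemma add_left_cancel: "x \<in> G \<Longrightarrow> y \<in> G \<Longrightarrow> z \<in> G \<Longrightarrow> x \<oplus> y = x \<oplus> z \<Longrightarrow> y = z"
proof -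
  assume h: "x \<in> G" "y \<in> G" "z \<in> G" "x \<oplus> y = x \<oplus> z"
  have "ng x \<oplus> (x \<oplus> y) = ng x \<oplus> (x \<oplus> z)" using h by simp
  thus ?thesis using h(1-3) by simp
qed
lemma add_left_cancel_iff[simp]: "x \<in> G \<Longrightarrow> y \<in> G \<Longrightarrow> z \<in> G \<Longrightarrow> (x \<oplus> y = x \<oplus> z) = (y = z)"
  using add_left_cancel by blast
lemma add_right_cancel_iff[simp]: "x \<in> G \<Longrightarrow> y \<in> G \<Longrightarrow> z \<in> G \<Longrightarrow> (y \<oplus> x = z \<oplus> x) = (y = z)"
  by (simp add: add_comm[of _ x])
lemma neg_unique: "x \<in> G \<Longrightarrow> y \<in> G \<Longrightarrow> x \<oplus> y = \<zero> \<Longrightarrow> y = ng x"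
proof -
  assume h: "x \<in> G" "y \<in> G" "x \<oplus> y = \<zero>"
  have "y = ng x \<oplus> (x \<oplus> y)" using h(1,2) by simp
  also have "\<dots> = ng x" using h by simp
  finally show ?thesis .
qed
lemma neg_neg[simp]: "x \<in> G \<Longrightarrow> ng (ng x) = x"
  by (rule neg_unique[symmetric]) simp_all
lemma neg_zero[simp]: "ng \<zero> = \<zero>"
  by (rule neg_unique[symmetric]) simp_all
lemma neg_add_distrib[simp]: "x \<in> G \<Longrightarrow> y \<in> G \<Longrightarrow> ng (x \<oplus> y) = ng x \<oplus> ng y"
proof -
  assume h: "x \<in> G" "y \<in> G"
  have "(x \<oplus> y) \<oplus> (ng x \<oplus> ng y) = \<zero>" using h by (simp add: add_ac)
  then have "ng x \<oplus> ng y = ng (x \<oplus> y)" using h by (intro neg_unique) simp_all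
  then show ?thesis by simp
qed
lemma eq_iff_diff: "x \<in> G \<Longrightarrow> y \<in> G \<Longrightarrow> (x = y) = (x \<oplus> ng y = \<zero>)"
proof
  assume h: "x \<in> G" "y \<in> G" "x \<oplus> ng y = \<zero>"
  then have "ng y = ng x" by (intro neg_unique) simp_all
  then have "ng (ng y) = ng (ng x)" by simp
  then show "x = y" using h by simp
qed simp

lemma mul_assoc: "x \<in> G \<Longrightarrow> y \<in> G \<Longrightarrow> z \<in> G \<Longrightarrow> x \<otimes> y \<otimes> z = x \<otimes> (y \<otimes> z)"
  using br unfolding is_brace_def by blast
lemma mul_zero[simp]: "x \<in> G \<Longrightarrow> x \<otimes> \<zero> = x" using br unfolding is_brace_def by blast
lemma zero_mul[simp]: "x \<in> G \<Longrightarrow> \<zero> \<otimes> x = x" using br unfolding is_brace_def by blast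
lemma mul_inv: "x \<in> G \<Longrightarrow> \<exists>y\<in>G. x \<otimes> y = \<zero> \<and> y \<otimes> x = \<zero>" using br unfolding is_brace_def by blast
lemma distrib: "x \<in> G \<Longrightarrow> y \<in> G \<Longrightarrow> z \<in> G \<Longrightarrow> x \<otimes> (y \<oplus> z) = x \<otimes> y \<oplus> x \<otimes> z \<oplus> ng x"
  using br unfolding is_brace_def by blast

lemma star_closed[simp]: "x \<in> G \<Longrightarrow> y \<in> G \<Longrightarrow> x \<star> y \<in> G" by (simp add: star_def)

lemmas cl = zero_closed add_closed neg_closed mul_closed star_closed

lemma mul_eq: "x \<in> G \<Longrightarrow> y \<in> G \<Longrightarrow> x \<otimes> y = x \<oplus> y \<oplus> x \<star> y"
proof -
  assume h: "x \<in> G" "y \<in> G"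
  have "x \<oplus> y \<oplus> x \<star> y = (x \<oplus> ng x) \<oplus> ((y \<oplus> ng y) \<oplus> x \<otimes> y)"
    using h unfolding star_def by (simp only: add_ac cl)
  then show ?thesis using h by simp
qed

lemma star_add: "u \<in> G \<Longrightarrow> x \<in> G \<Longrightarrow> y \<in> G \<Longrightarrow> u \<star> (x \<oplus> y) = u \<star> x \<oplus> u \<star> y"
  by (simp add: star_def distrib add_ac)

lemma star_zero_right[simp]: "u \<in> G \<Longrightarrow> u \<star> \<zero> = \<zero>" by (simp add: star_def)
lemma star_zero_left[simp]: "u \<in> G \<Longrightarrow> \<zero> \<star> u = \<zero>" by (simp add: star_def)

lemma star_mul_left: "u \<in> G \<Longrightarrow> w \<in> G \<Longrightarrow> v \<in> G \<Longrightarrow> (u \<otimes> w) \<star> v = u \<star> v \<oplus> w \<star> v \<oplus> u \<star> (w \<star> v)"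
proof -
  assume h: "u \<in> G" "w \<in> G" "v \<in> G"
  have "(u \<otimes> w) \<otimes> v = u \<otimes> (w \<otimes> v)" using h by (simp add: mul_assoc)
  also have "\<dots> = u \<otimes> (w \<oplus> (v \<oplus> w \<star> v))" using h by (simp add: mul_eq add_ac)
  also have "\<dots> = u \<otimes> w \<oplus> (u \<otimes> v \<oplus> u \<otimes> (w \<star> v) \<oplus> ng u) \<oplus> ng u" using h by (simp add: distrib)
  finally have e: "(u \<otimes> w) \<otimes> v = u \<otimes> w \<oplus> (u \<otimes> v \<oplus> u \<otimes> (w \<star> v) \<oplus> ng u) \<oplus> ng u" .
  have "(u \<otimes> w) \<star> v = (u \<otimes> w) \<otimes> v \<oplus> ng (u \<otimes> w) \<oplus> ng v" by (simp add: star_def)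
  also have "\<dots> = u \<otimes> v \<oplus> u \<otimes> (w \<star> v) \<oplus> ng u \<oplus> ng u \<oplus> ng v" using h by (simp only: e) (simp add: add_ac)
  also have "\<dots> = (u \<oplus> v \<oplus> u \<star> v) \<oplus> (u \<oplus> w \<star> v \<oplus> u \<star> (w \<star> v)) \<oplus> ng u \<oplus> ng u \<oplus> ng v" using h by (simp add: mul_eq)
  also have "\<dots> = (u \<oplus> ng u) \<oplus> ((u \<oplus> ng u) \<oplus> ((v \<oplus> ng v) \<oplus> (u \<star> v \<oplus> w \<star> v \<oplus> u \<star> (w \<star> v))))"
    using h by (simp only: add_ac cl)
  also have "\<dots> = u \<star> v \<oplus> w \<star> v \<oplus> u \<star> (w \<star> v)" using h by simp
  finally show ?thesis .
qed


lemma ns_0[simp]: "nat_smul A 0 x = \<zero>" by (simp add: nat_smul_def)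
lemma ns_Suc: "nat_smul A (Suc n) x = x \<oplus> nat_smul A n x" by (simp add: nat_smul_def)
lemma ns_closed[simp]: "x \<in> G \<Longrightarrow> nat_smul A n x \<in> G" by (induction n) (simp_all add: ns_Suc)
lemma ns_add: "x \<in> G \<Longrightarrow> nat_smul A (p + q) x = nat_smul A p x \<oplus> nat_smul A q x"
  by (induction p) (simp_all add: ns_Suc add_assoc)

definition zs :: "int \<Rightarrow> 'a \<Rightarrow> 'a" where
  "zs n x = nat_smul A (nat n) x \<oplus> ng (nat_smul A (nat (- n)) x)"

lemma zs_closed[simp]: "x \<in> G \<Longrightarrow> zs n x \<in> G" by (simp add: zs_def)

lemma zs_diff: "x \<in> G \<Longrightarrow> zs (int p - int q) x = nat_smul A p x \<oplus> ng (nat_smul A q x)"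
proof (cases "q \<le> p")
  case True
  assume x: "x \<in> G"
  obtain r where r: "p = r + q" using True by (metis le_add_diff_inverse2)
  have "int p - int q = int r" using r by simp
  then have "zs (int p - int q) x = nat_smul A r x" using x by (simp add: zs_def)
  also have "\<dots> = nat_smul A p x \<oplus> ng (nat_smul A q x)" using x by (simp add: r ns_add add_assoc)
  finally show ?thesis .
next
  case False
  assume x: "x \<in> G"
  obtain r where r: "q = p + r" using False by (metis le_add_diff_inverse nat_le_linear)
  have "int p - int q = - int r" using r by simp
  then have "zs (int p - int q) x = ng (nat_smul A r x)" using x by (simp add: zs_def)
  also have "\<dots> = nat_smul A p x \<oplus> ng (nat_smul A q x)" using x by (simp add: r ns_add)
  finally show ?thesis .
qed

lemma int_split: "(i::int) = int (nat i) - int (nat (- i))" by simp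

lemma zs_add: "x \<in> G \<Longrightarrow> zs (i + j) x = zs i x \<oplus> zs j x"
proof -
  assume x: "x \<in> G"
  define p q p' q' where "p = nat i" "q = nat (-i)" "p' = nat j" "q' = nat (-j)"
  have i: "i = int p - int q" and j: "j = int p' - int q'" unfolding p_q_p'_q'_def by simp_all
  have e: "i + j = int (p + p') - int (q + q')" using i j by simp
  have "zs (i + j) x = nat_smul A (p + p') x \<oplus> ng (nat_smul A (q + q') x)" unfolding e by (rule zs_diff[OF x])
  also have "\<dots> = (nat_smul A p x \<oplus> ng (nat_smul A q x)) \<oplus> (nat_smul A p' x \<oplus> ng (nat_smul A q' x))"
    using x by (simp add: ns_add add_ac)
  also have "\<dots> = zs i x \<oplus> zs j x" using x by (simp add: i j zs_diff)
  finally show ?thesis .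
qed

lemma zs_0[simp]: "zs 0 x = \<zero>" by (simp add: zs_def)
lemma zs_1[simp]: "x \<in> G \<Longrightarrow> zs 1 x = x" by (simp add: zs_def nat_smul_def)
lemma zs_neg: "x \<in> G \<Longrightarrow> zs (- i) x = ng (zs i x)"
proof -
  assume x: "x \<in> G"
  have "zs i x \<oplus> zs (- i) x = \<zero>" using x zs_add[of x i "-i"] by simp
  then show ?thesis using x by (intro neg_unique) simp_all
qed

lemma zs_mult_nat: "x \<in> G \<Longrightarrow> zs (int n * j) x = zs (int n) (zs j x)"
proof (induction n)
  case 0 then show ?case by simp
next
  case (Suc n)
  have "zs (int (Suc n) * j) x = zs (int n * j + j) x" by (simp add: algebra_simps)
  also have "\<dots> = zs (int n) (zs j x) \<oplus> zs j x" using Suc by (simp add: zs_add)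
  also have "\<dots> = zs (int n + 1) (zs j x)" using Suc by (simp add: zs_add)
  finally show ?case by (simp add: add.commute)
qed

lemma zs_mult: "x \<in> G \<Longrightarrow> zs (i * j) x = zs i (zs j x)"
proof (cases "i \<ge> 0")
  case True
  assume x: "x \<in> G"
  then show ?thesis using zs_mult_nat[OF x, of "nat i" j] True by simp
next
  case False
  assume x: "x \<in> G"
  define n where "n = nat (- i)"
  have i: "i = - int n" using False n_def by simp
  have "zs (i * j) x = ng (zs (int n * j) x)" using x by (simp add: i zs_neg[symmetric])
  also have "\<dots> = ng (zs (int n) (zs j x))" using x by (simp add: zs_mult_nat)
  also have "\<dots> = zs i (zs j x)" using x by (simp add: i zs_neg)
  finally show ?thesis .
qed

lemma zs_hom:
  assumes S: "S \<subseteq> G" "\<zero> \<in> S" "\<And>x y. x \<in> S \<Longrightarrow> y \<in> S \<Longrightarrow> x \<oplus> y \<in> S" "\<And>x. x \<in> S \<Longrightarrow> ng x \<in> S"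
    and f: "\<And>x y. x \<in> S \<Longrightarrow> y \<in> S \<Longrightarrow> f (x \<oplus> y) = f x \<oplus> f y" "\<And>x. x \<in> S \<Longrightarrow> f x \<in> G"
    and x: "x \<in> S"
  shows "zs i x \<in> S" "f (zs i x) = zs i (f x)"
proof -
  have f0: "f \<zero> = \<zero>"
  proof -
    have "f \<zero> \<oplus> f \<zero> = f \<zero> \<oplus> \<zero>" using f(1)[of \<zero> \<zero>] S f(2) by simp
    then show ?thesis using S f(2) by (simp del: add_zero)
  qed
  have fneg: "f (ng y) = ng (f y)" if y: "y \<in> S" for y
  proof -
    have "f y \<oplus> f (ng y) = \<zero>" using f(1)[of y "ng y"] y S f0 by (simp add: subset_iff)
    then show ?thesis using y S f(2) by (intro neg_unique) simp_all
  qed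
  have ns: "nat_smul A n x \<in> S \<and> f (nat_smul A n x) = nat_smul A n (f x)" for n
    by (induction n) (use S f x f0 in \<open>simp_all add: ns_Suc\<close>)
  show "zs i x \<in> S" unfolding zs_def using ns S by simp
  show "f (zs i x) = zs i (f x)" unfolding zs_def using ns S f fneg by simp
qed


abbreviation Z where "Z \<equiv> star_center A"

lemma Z_G: "z \<in> Z \<Longrightarrow> z \<in> G" by (simp add: star_center_def)
lemma Z_l: "z \<in> Z \<Longrightarrow> v \<in> G \<Longrightarrow> z \<star> v = \<zero>" by (simp add: star_center_def)
lemma Z_r: "z \<in> Z \<Longrightarrow> v \<in> G \<Longrightarrow> v \<star> z = \<zero>" by (simp add: star_center_def)

lemma star_neg_right: "u \<in> G \<Longrightarrow> x \<in> G \<Longrightarrow> u \<star> ng x = ng (u \<star> x)"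
proof -
  assume h: "u \<in> G" "x \<in> G"
  have "u \<star> x \<oplus> u \<star> ng x = \<zero>" using h star_add[of u x "ng x"] by simp
  then show ?thesis using h by (intro neg_unique) simp_all
qed

lemma star_zs_right: "u \<in> G \<Longrightarrow> x \<in> G \<Longrightarrow> u \<star> zs i x = zs i (u \<star> x)"
  by (rule zs_hom(2)[of G]) (simp_all add: star_add)

lemma add_Z_left: "u \<in> G \<Longrightarrow> z \<in> Z \<Longrightarrow> v \<in> G \<Longrightarrow> (u \<oplus> z) \<star> v = u \<star> v"
proof -
  assume h: "u \<in> G" "z \<in> Z" "v \<in> G"
  have zG: "z \<in> G" using h Z_G by blast
  have "u \<oplus> z = u \<otimes> z" using h zG by (simp add: mul_eq Z_r)
  then have "(u \<oplus> z) \<star> v = u \<star> v \<oplus> z \<star> v \<oplus> u \<star> (z \<star> v)" using h zG by (simp add: star_mul_left)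
  then show ?thesis using h zG by (simp add: Z_l Z_r)
qed

lemma Z_zero[simp]: "\<zero> \<in> Z" by (simp add: star_center_def)
lemma Z_add: "z1 \<in> Z \<Longrightarrow> z2 \<in> Z \<Longrightarrow> z1 \<oplus> z2 \<in> Z"
proof -
  assume h: "z1 \<in> Z" "z2 \<in> Z"
  have g: "z1 \<in> G" "z2 \<in> G" using h Z_G by auto
  have "(z1 \<oplus> z2) \<star> v = \<zero>" if "v \<in> G" for v using add_Z_left[of z1 z2 v] g h that by (simp add: Z_l Z_r)
  moreover have "v \<star> (z1 \<oplus> z2) = \<zero>" if "v \<in> G" for v using star_add[of v z1 z2] g h that by (simp add: Z_l Z_r)
  ultimately show ?thesis using g by (simp add: star_center_def)
qed
lemma Z_neg: "z \<in> Z \<Longrightarrow> ng z \<in> Z"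
proof -
  assume h: "z \<in> Z"
  have g: "z \<in> G" using h Z_G by auto
  have m: "z \<otimes> ng z = \<zero>" using g h by (simp add: mul_eq Z_l Z_r)
  have "(ng z) \<star> v = \<zero>" if v: "v \<in> G" for v
  proof -
    have "\<zero> = (z \<otimes> ng z) \<star> v" using m v by simp
    also have "\<dots> = z \<star> v \<oplus> (ng z) \<star> v \<oplus> z \<star> ((ng z) \<star> v)" using g v by (simp add: star_mul_left Z_l Z_r)
    finally show ?thesis using g v h by (simp add: Z_l Z_r)
  qed
  moreover have "v \<star> ng z = \<zero>" if "v \<in> G" for v using star_neg_right[of v z] g h that by (simp add: Z_l Z_r)
  ultimately show ?thesis using g by (simp add: star_center_def)
qed
lemma Z_zs: "z \<in> Z \<Longrightarrow> zs i z \<in> Z"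
  by (rule zs_hom(1)[of Z "\<lambda>x. x"]) (auto simp: Z_G Z_add Z_neg)

definition Pset where "Pset = {w \<in> G. \<forall>y\<in>G. w \<star> y \<in> Z}"

lemma P_add_star: "w1 \<in> Pset \<Longrightarrow> w2 \<in> Pset \<Longrightarrow> v \<in> G \<Longrightarrow> (w1 \<oplus> w2) \<star> v = w1 \<star> v \<oplus> w2 \<star> v"
proof -
  assume h: "w1 \<in> Pset" "w2 \<in> Pset" "v \<in> G"
  have g: "w1 \<in> G" "w2 \<in> G" and z: "w1 \<star> w2 \<in> Z" "w2 \<star> v \<in> Z" using h by (auto simp: Pset_def)
  have "w1 \<oplus> w2 = (w1 \<otimes> w2) \<oplus> ng (w1 \<star> w2)" using g by (simp add: mul_eq add_assoc)
  then have "(w1 \<oplus> w2) \<star> v = (w1 \<otimes> w2) \<star> v" using add_Z_left[of "w1 \<otimes> w2" "ng (w1 \<star> w2)" v] g h z Z_neg by simp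
  also have "\<dots> = w1 \<star> v \<oplus> w2 \<star> v" using g h z by (simp add: star_mul_left Z_l Z_r)
  finally show ?thesis .
qed

lemma P_G: "w \<in> Pset \<Longrightarrow> w \<in> G" by (simp add: Pset_def)
lemma P_zero: "\<zero> \<in> Pset" by (simp add: Pset_def)
lemma P_add: "w1 \<in> Pset \<Longrightarrow> w2 \<in> Pset \<Longrightarrow> w1 \<oplus> w2 \<in> Pset"
  using P_add_star by (auto simp: Pset_def intro: Z_add)

lemma P_neg_star: "w \<in> Pset \<Longrightarrow> v \<in> G \<Longrightarrow> (ng w) \<star> v = ng (w \<star> v)"
proof -
  assume h: "w \<in> Pset" "v \<in> G"
  have g: "w \<in> G" using h P_G by auto
  obtain w' where w': "w' \<in> G" "w \<otimes> w' = \<zero>" "w' \<otimes> w = \<zero>" using mul_inv[OF g] by blast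
  have wz: "w \<star> y \<in> Z" if "y \<in> G" for y using h that by (simp add: Pset_def)
  have "\<zero> = (w' \<otimes> w) \<star> v" using w' h by simp
  also have "\<dots> = w' \<star> v \<oplus> w \<star> v" using w'(1) g h wz by (simp add: star_mul_left Z_l Z_r)
  finally have "w \<star> v \<oplus> w' \<star> v = \<zero>" using w' g h by (simp add: add_comm)
  then have e1: "w' \<star> v = ng (w \<star> v)" using w' g h by (intro neg_unique) simp_all
  have "w \<oplus> (w' \<oplus> w \<star> w') = w \<otimes> w'" using w'(1) g by (simp add: mul_eq add_assoc)
  then have "w \<oplus> (w' \<oplus> w \<star> w') = \<zero>" using w'(2) by simp
  then have e2: "ng w = w' \<oplus> w \<star> w'" using w' g by (intro neg_unique[symmetric]) simp_all
  have "(ng w) \<star> v = w' \<star> v" unfolding e2 using add_Z_left w' wz h by simp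
  then show ?thesis using e1 by simp
qed

lemma P_neg: "w \<in> Pset \<Longrightarrow> ng w \<in> Pset"
  using P_neg_star by (auto simp: Pset_def intro: Z_neg)

lemma P_zs_star: "w \<in> Pset \<Longrightarrow> v \<in> G \<Longrightarrow> (zs i w) \<star> v = zs i (w \<star> v)"
  by (rule zs_hom(2)[of Pset "\<lambda>x. x \<star> v"]) (auto simp: P_G P_zero P_add P_neg P_add_star)

lemma K1: "a \<in> Pset \<Longrightarrow> z \<in> Z \<Longrightarrow> v \<in> G \<Longrightarrow> (zs i a \<oplus> z) \<star> v = zs i (a \<star> v)"
  by (simp add: add_Z_left P_G P_zs_star)

lemma K2: "a \<in> G \<Longrightarrow> z \<in> Z \<Longrightarrow> v \<in> G \<Longrightarrow> v \<star> (zs j a \<oplus> z) = zs j (v \<star> a)"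
  by (simp add: star_add Z_G star_zs_right Z_r)


definition wsub where
  "wsub W \<longleftrightarrow> W \<subseteq> Z \<and> \<zero> \<in> W \<and> (\<forall>x\<in>W. \<forall>y\<in>W. x \<oplus> y \<in> W) \<and> (\<forall>x\<in>W. ng x \<in> W)"

lemma wsub_zs: "wsub W \<Longrightarrow> x \<in> W \<Longrightarrow> zs k x \<in> W"
  unfolding wsub_def by (rule zs_hom(1)[of W "\<lambda>x. x"]) (auto simp: Z_G)

lemma wsub_G: "wsub W \<Longrightarrow> x \<in> W \<Longrightarrow> x \<in> G"
  unfolding wsub_def using Z_G by auto

lemma tf_zs: "add_torsion_free A Z \<Longrightarrow> z \<in> Z \<Longrightarrow> zs N z = \<zero> \<Longrightarrow> N \<noteq> 0 \<Longrightarrow> z = \<zero>"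
proof -
  assume tf: "add_torsion_free A Z" and z: "z \<in> Z" and e: "zs N z = \<zero>" and N: "N \<noteq> 0"
  have g: "z \<in> G" using z Z_G by auto
  have pos: "nat_smul A n z = \<zero> \<Longrightarrow> n > 0 \<Longrightarrow> z = \<zero>" for n using tf z unfolding add_torsion_free_def by blast
  show ?thesis
  proof (cases "N > 0")
    case True
    then have "zs N z = nat_smul A (nat N) z" using g by (simp add: zs_def)
    then show ?thesis using pos[of "nat N"] e True by simp
  next
    case False
    then have "zs N z = ng (nat_smul A (nat (- N)) z)" using g N by (simp add: zs_def)
    then have "ng (nat_smul A (nat (- N)) z) = \<zero>" using e by simp
    then have "ng (ng (nat_smul A (nat (- N)) z)) = ng \<zero>" by simp
    then have "nat_smul A (nat (- N)) z = \<zero>" using g by simp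
    then show ?thesis using pos[of "nat (- N)"] False N g by simp
  qed
qed

end

locale main = brace +
  fixes a
  assumes a2: "a \<in> center_step A (star_center A)"
begin

abbreviation c where "c \<equiv> a \<star> a"

lemma aG[simp]: "a \<in> G" using a2 by (simp add: center_step_def)
lemma aP: "a \<in> Pset" using a2 by (simp add: center_step_def Pset_def)
lemma a_l: "x \<in> G \<Longrightarrow> a \<star> x \<in> Z" using a2 by (simp add: center_step_def)
lemma a_r: "x \<in> G \<Longrightarrow> x \<star> a \<in> Z" using a2 by (simp add: center_step_def)
lemma cZ: "c \<in> Z" using a_l by simp
lemma cG[simp]: "c \<in> G" by simp

lemma SF: "w \<in> Z \<Longrightarrow> w' \<in> Z \<Longrightarrow> (zs i a \<oplus> w) \<star> (zs j a \<oplus> w') = zs (i * j) c"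
proof -
  assume w: "w \<in> Z" "w' \<in> Z"
  have g: "w \<in> G" "w' \<in> G" using w Z_G by auto
  have "(zs i a \<oplus> w) \<star> (zs j a \<oplus> w') = zs i (a \<star> (zs j a \<oplus> w'))" using K1 aP w g by simp
  also have "\<dots> = zs i (zs j c)" using K2[of a w' a] w by simp
  also have "\<dots> = zs (i * j) c" by (simp add: zs_mult)
  finally show ?thesis .
qed

lemma MF: "w \<in> Z \<Longrightarrow> w' \<in> Z \<Longrightarrow> (zs i a \<oplus> w) \<otimes> (zs j a \<oplus> w') = zs (i + j) a \<oplus> (w \<oplus> w' \<oplus> zs (i * j) c)"
proof -
  assume w: "w \<in> Z" "w' \<in> Z"
  have g: "w \<in> G" "w' \<in> G" using w Z_G by auto
  have "(zs i a \<oplus> w) \<otimes> (zs j a \<oplus> w') = (zs i a \<oplus> w) \<oplus> (zs j a \<oplus> w') \<oplus> zs (i * j) c"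
    using g w by (simp add: mul_eq SF)
  also have "\<dots> = zs (i + j) a \<oplus> (w \<oplus> w' \<oplus> zs (i * j) c)" using g by (simp add: zs_add add_ac)
  finally show ?thesis .
qed

definition Tset where "Tset m W = {y. \<exists>i w. m dvd i \<and> w \<in> W \<and> y = zs i a \<oplus> w}"

lemma T_intro: "m dvd i \<Longrightarrow> w \<in> W \<Longrightarrow> zs i a \<oplus> w \<in> Tset m W"
  unfolding Tset_def by blast

lemma T_W: "w \<in> W \<Longrightarrow> wsub W \<Longrightarrow> w \<in> Tset m W"
  unfolding Tset_def by (rule CollectI, rule exI[of _ 0], rule exI[of _ w]) (simp add: wsub_G)

lemma T_sub: assumes W: "wsub W" and cc: "zs (m * m) c \<in> W" shows "subbrace A (Tset m W)"
proof -
  have WZ: "x \<in> W \<Longrightarrow> x \<in> Z" for x using W by (auto simp: wsub_def)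
  have WG: "x \<in> W \<Longrightarrow> x \<in> G" for x using W wsub_G by auto
  have cl1: "x \<in> W \<Longrightarrow> y \<in> W \<Longrightarrow> x \<oplus> y \<in> W" "x \<in> W \<Longrightarrow> ng x \<in> W" for x y using W by (auto simp: wsub_def)
  have mulW: "m dvd i \<Longrightarrow> m dvd j \<Longrightarrow> zs (i * j) c \<in> W" for i j
  proof -
    assume d: "m dvd i" "m dvd j"
    from d(1) obtain k where k: "i = m * k" by (rule dvdE)
    from d(2) obtain l where l: "j = m * l" by (rule dvdE)
    from k l have "i * j = (k * l) * (m * m)" by (simp add: algebra_simps)
    then have "zs (i * j) c = zs (k * l) (zs (m * m) c)" by (simp add: zs_mult)
    then show ?thesis using wsub_zs[OF W cc, of "k * l"] by simp
  qed
  show ?thesis unfolding subbrace_def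
  proof (intro conjI ballI)
    show "Tset m W \<subseteq> G" unfolding Tset_def using WG by auto
    show "\<zero> \<in> Tset m W" using T_W W by (simp add: wsub_def)
  next
    fix x y assume x: "x \<in> Tset m W" and y: "y \<in> Tset m W"
    obtain i w where i: "m dvd i" "w \<in> W" "x = zs i a \<oplus> w" using x unfolding Tset_def by blast
    obtain j w' where j: "m dvd j" "w' \<in> W" "y = zs j a \<oplus> w'" using y unfolding Tset_def by blast
    have e: "x \<oplus> y = zs (i + j) a \<oplus> (w \<oplus> w')" using i j WG by (simp add: zs_add add_ac)
    show "x \<oplus> y \<in> Tset m W" unfolding e using i j cl1 by (intro T_intro) simp_all
    have e: "x \<otimes> y = zs (i + j) a \<oplus> (w \<oplus> w' \<oplus> zs (i * j) c)" using i j WZ by (simp add: MF)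
    show "x \<otimes> y \<in> Tset m W" unfolding e using i j cl1 mulW by (intro T_intro) simp_all
  next
    fix x assume x: "x \<in> Tset m W"
    obtain i w where i: "m dvd i" "w \<in> W" "x = zs i a \<oplus> w" using x unfolding Tset_def by blast
    have e: "ng x = zs (- i) a \<oplus> ng w" using i WG by (simp add: zs_neg)
    show "ng x \<in> Tset m W" unfolding e using i cl1 by (intro T_intro) simp_all
    define b where "b = zs (- i) a \<oplus> (ng w \<oplus> zs (i * i) c)"
    have bW: "ng w \<oplus> zs (i * i) c \<in> W" using cl1 mulW i by blast
    have bT: "b \<in> Tset m W" unfolding b_def using i bW by (intro T_intro) simp_all
    have X: "zs (i * i) c \<in> G" by simp
    have "x \<otimes> b = zs (i + - i) a \<oplus> (w \<oplus> (ng w \<oplus> zs (i * i) c) \<oplus> zs (i * - i) c)"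
      unfolding b_def i(3) using i WZ bW by (simp add: MF)
    also have "\<dots> = \<zero>" using WG i X by (simp add: zs_neg)
    finally have e1: "x \<otimes> b = \<zero>" .
    have "b \<otimes> x = zs (- i + i) a \<oplus> ((ng w \<oplus> zs (i * i) c) \<oplus> w \<oplus> zs (- i * i) c)"
      unfolding b_def i(3) using i WZ bW by (simp add: MF)
    also have "(ng w \<oplus> zs (i * i) c) \<oplus> w = zs (i * i) c" using WG i X by (simp add: add_ac)
    also have "zs (- i + i) a \<oplus> (zs (i * i) c \<oplus> zs (- i * i) c) = \<zero>" using X by (simp add: zs_neg)
    finally have e2: "b \<otimes> x = \<zero>" .
    show "\<exists>b\<in>Tset m W. x \<otimes> b = \<zero> \<and> b \<otimes> x = \<zero>" using bT e1 e2 by blast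
  qed
qed


lemma wsub_Z: "wsub Z" unfolding wsub_def by (auto intro: Z_add Z_neg)

lemma star_upd: "star (A\<lparr>carrier := J\<rparr>) u v = u \<star> v" by (simp add: star_def)

lemma T_ideal_A: assumes S: "subbrace A (Tset m Z)" shows "brace_ideal A (Tset m Z)"
  unfolding brace_ideal_def
proof (intro conjI ballI S)
  fix x y assume x: "x \<in> G" and y: "y \<in> Tset m Z"
  obtain i w where i: "m dvd i" "w \<in> Z" "y = zs i a \<oplus> w" using y unfolding Tset_def by blast
  have "x \<star> y = zs i (x \<star> a)" using i x K2 by simp
  moreover have "zs i (x \<star> a) \<in> Z" using a_r[OF x] by (rule Z_zs)
  ultimately show "x \<star> y \<in> Tset m Z" using T_W wsub_Z by simp
  have "y \<star> x = zs i (a \<star> x)" using i x K1 aP by simp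
  moreover have "zs i (a \<star> x) \<in> Z" using a_l[OF x] by (rule Z_zs)
  ultimately show "y \<star> x \<in> Tset m Z" using T_W wsub_Z by simp
qed

lemma T_ideal_J:
  assumes W: "wsub W" and W': "wsub W'" and d: "m dvd m'" and WW: "W' \<subseteq> W"
    and cc: "zs (m * m') c \<in> W'" and S: "subbrace A (Tset m' W')"
  shows "brace_ideal (A\<lparr>carrier := Tset m W\<rparr>) (Tset m' W')"
proof -
  have WZ: "W \<subseteq> Z" "W' \<subseteq> Z" using W W' by (auto simp: wsub_def)
  have sub: "Tset m' W' \<subseteq> Tset m W"
  proof
    fix y assume "y \<in> Tset m' W'"
    then obtain i w where i: "m' dvd i" "w \<in> W'" "y = zs i a \<oplus> w" unfolding Tset_def by blast
    show "y \<in> Tset m W" unfolding i(3) using i d WW by (intro T_intro) auto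
  qed
  have key: "zs (i * k) c \<in> W'" if "m dvd i" "m' dvd k" for i k
  proof -
    from that(1) obtain p where p: "i = m * p" by (rule dvdE)
    from that(2) obtain q where q: "k = m' * q" by (rule dvdE)
    from p q have "i * k = (p * q) * (m * m')" by (simp add: algebra_simps)
    then have "zs (i * k) c = zs (p * q) (zs (m * m') c)" by (simp add: zs_mult)
    then show ?thesis using wsub_zs[OF W' cc, of "p * q"] by simp
  qed
  have sb: "subbrace (A\<lparr>carrier := Tset m W\<rparr>) (Tset m' W')"
    using S sub unfolding subbrace_def by simp
  show ?thesis unfolding brace_ideal_def star_upd
  proof (intro conjI ballI sb)
    fix x y assume x: "x \<in> carrier (A\<lparr>carrier := Tset m W\<rparr>)" and y: "y \<in> Tset m' W'"
    have x': "x \<in> Tset m W" using x by simp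
    obtain i w where i: "m dvd i" "w \<in> W" "x = zs i a \<oplus> w" using x' unfolding Tset_def by blast
    obtain k w' where k: "m' dvd k" "w' \<in> W'" "y = zs k a \<oplus> w'" using y unfolding Tset_def by blast
    have wz: "w \<in> Z" "w' \<in> Z" using i(2) k(2) WZ by auto
    have "x \<star> y = zs (i * k) c" unfolding i(3) k(3) using SF[OF wz] by simp
    then show "x \<star> y \<in> Tset m' W'" using key[OF i(1) k(1)] T_W W' by simp
    have "y \<star> x = zs (i * k) c" unfolding i(3) k(3) using SF[OF wz(2,1)] by (simp add: mult.commute)
    then show "y \<star> x \<in> Tset m' W'" using key[OF i(1) k(1)] T_W W' by simp
  qed
qed


lemma main_a:
  assumes T: "T_brace A" and tf: "add_torsion_free A Z"
  shows "a \<in> Z"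
proof (rule ccontr)
  assume na: "a \<notin> Z"
  have Tid: "brace_ideal A I" if "brace_ideal (A\<lparr>carrier := J\<rparr>) I" "brace_ideal A J" for I J
    using T that unfolding T_brace_def by blast
  have inZ: "a \<in> Z" if h: "\<And>x. x \<in> G \<Longrightarrow> a \<star> x = \<zero> \<and> x \<star> a = \<zero>"
    using h by (simp add: star_center_def)
  have fin: False if N: "N \<noteq> 0" "zs N a \<in> Z" for N
  proof -
    have "a \<star> x = \<zero> \<and> x \<star> a = \<zero>" if x: "x \<in> G" for x
    proof
      have "zs N (a \<star> x) = (zs N a) \<star> x" using P_zs_star[OF aP x] by simp
      also have "\<dots> = \<zero>" using N x by (simp add: Z_l)
      finally show "a \<star> x = \<zero>" using tf_zs[OF tf a_l[OF x] _ N(1)] by simp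
      have "zs N (x \<star> a) = x \<star> (zs N a)" using star_zs_right[OF x aG] by simp
      also have "\<dots> = \<zero>" using N x by (simp add: Z_r)
      finally show "x \<star> a = \<zero>" using tf_zs[OF tf a_r[OF x] _ N(1)] by simp
    qed
    then show False using inZ na by blast
  qed
  have c0: "c = \<zero>"
  proof -
    define W4 where "W4 = {y. \<exists>k. y = zs (4 * k) c}"
    have W4Z: "W4 \<subseteq> Z" unfolding W4_def using Z_zs cZ by auto
    have w4: "wsub W4" unfolding wsub_def
    proof (intro conjI ballI W4Z)
      show "\<zero> \<in> W4" unfolding W4_def by (rule CollectI, rule exI[of _ 0]) simp
    next
      fix x y assume "x \<in> W4" "y \<in> W4"
      then obtain k l where "x = zs (4 * k) c" "y = zs (4 * l) c" unfolding W4_def by blast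
      then have "x \<oplus> y = zs (4 * (k + l)) c" by (simp add: zs_add distrib_left)
      then show "x \<oplus> y \<in> W4" unfolding W4_def by blast
    next
      fix x assume "x \<in> W4"
      then obtain k where "x = zs (4 * k) c" unfolding W4_def by blast
      then have "ng x = zs (4 * (- k)) c" by (simp add: zs_neg)
      then show "ng x \<in> W4" unfolding W4_def by blast
    qed
    have cc4: "zs (2 * 2) c \<in> W4" unfolding W4_def by (rule CollectI, rule exI[of _ 1]) simp
    have sI: "subbrace A (Tset 2 W4)" by (rule T_sub[OF w4 cc4])
    have sJ: "subbrace A (Tset 2 Z)" by (rule T_sub[OF wsub_Z Z_zs[OF cZ]])
    have iJ: "brace_ideal A (Tset 2 Z)" by (rule T_ideal_A[OF sJ])
    have iIJ: "brace_ideal (A\<lparr>carrier := Tset 2 Z\<rparr>) (Tset 2 W4)"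
      by (rule T_ideal_J[OF wsub_Z w4 _ W4Z cc4 sI]) simp
    have iI: "brace_ideal A (Tset 2 W4)" using Tid iIJ iJ by blast
    have "zs 2 a \<oplus> \<zero> \<in> Tset 2 W4" using w4 by (intro T_intro) (simp_all add: wsub_def)
    then have "zs 2 a \<in> Tset 2 W4" by simp
    then have "a \<star> zs 2 a \<in> Tset 2 W4" using iI unfolding brace_ideal_def by simp
    then have "zs 2 c \<in> Tset 2 W4" using star_zs_right[OF aG aG] by simp
    then obtain i w where i: "2 dvd i" "w \<in> W4" "zs 2 c = zs i a \<oplus> w" unfolding Tset_def by blast
    obtain k where k: "w = zs (4 * k) c" using i(2) unfolding W4_def by blast
    have wZ: "w \<in> Z" using i(2) W4Z by auto
    have wG: "w \<in> G" using wZ Z_G by auto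
    have "zs i a = zs 2 c \<oplus> ng w" using i(3) wG by (simp add: add_assoc)
    moreover have "zs 2 c \<oplus> ng w \<in> Z" using Z_add Z_neg Z_zs cZ wZ by blast
    ultimately have "zs i a \<in> Z" by simp
    then have i0: "i = 0" using fin by blast
    then have e: "zs 2 c = zs (4 * k) c" using i(3) k wG by simp
    have "zs (2 + - (4 * k)) c = \<zero>" by (simp only: zs_add[OF cG] zs_neg[OF cG] e) simp
    moreover have "2 + - (4 * k) \<noteq> 0" by presburger
    ultimately show "c = \<zero>" using tf_zs[OF tf cZ] by blast
  qed
  have w0: "wsub {\<zero>}" unfolding wsub_def by simp
  have cc1: "zs (1 * 1) c \<in> {\<zero>}" using c0 by simp
  have sI: "subbrace A (Tset 1 {\<zero>})" by (rule T_sub[OF w0 cc1])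
  have sJ: "subbrace A (Tset 1 Z)" by (rule T_sub[OF wsub_Z Z_zs[OF cZ]])
  have iJ: "brace_ideal A (Tset 1 Z)" by (rule T_ideal_A[OF sJ])
  have iIJ: "brace_ideal (A\<lparr>carrier := Tset 1 Z\<rparr>) (Tset 1 {\<zero>})"
    by (rule T_ideal_J[OF wsub_Z w0 _ _ cc1 sI]) simp_all
  have iI: "brace_ideal A (Tset 1 {\<zero>})" using Tid iIJ iJ by blast
  have "zs 1 a \<oplus> \<zero> \<in> Tset 1 {\<zero>}" by (intro T_intro) simp_all
  then have aI: "a \<in> Tset 1 {\<zero>}" by simp
  have zero_of: "y = \<zero>" if y: "y \<in> Tset 1 {\<zero>}" "y \<in> Z" for y
  proof -
    obtain i w where i: "w \<in> {\<zero>}" "y = zs i a \<oplus> w" using y(1) unfolding Tset_def by blast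
    then have yi: "y = zs i a" by simp
    show ?thesis
    proof (cases "i = 0")
      case True then show ?thesis using yi by simp
    next
      case False then show ?thesis using fin yi y(2) by blast
    qed
  qed
  have "a \<star> x = \<zero> \<and> x \<star> a = \<zero>" if x: "x \<in> G" for x
  proof
    show "a \<star> x = \<zero>" using iI aI x a_l[OF x] zero_of unfolding brace_ideal_def by blast
    show "x \<star> a = \<zero>" using iI aI x a_r[OF x] zero_of unfolding brace_ideal_def by blast
  qed
  then show False using inZ na by blast
qed

end

theorem theoremA:
  fixes A :: "('a, 'b) brace_str_scheme"
  assumes "T_brace A"
    and "add_torsion_free A (star_center A)"
  shows "star_hypercenter A = star_center A"
proof -
  interpret brace A using assms(1) by (unfold_locales) (simp add: T_brace_def)
  show ?thesis
  proof
    show "star_hypercenter A \<subseteq> star_center A"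
    proof
      fix x assume "x \<in> star_hypercenter A"
      then show "x \<in> star_center A"
      proof (induction rule: star_hypercenter.induct)
        case base then show ?case by simp
      next
        case (step b)
        have "b \<in> center_step A (star_center A)" using step by (auto simp: center_step_def)
        then interpret main A b by unfold_locales
        show ?case using main_a assms by blast
      qed
    qed
    show "star_center A \<subseteq> star_hypercenter A"
    proof
      fix z assume z: "z \<in> star_center A"
      show "z \<in> star_hypercenter A"
      proof (rule star_hypercenter.step)
        show "z \<in> G" using z Z_G by blast
        fix x assume "x \<in> G"
        then show "z \<star> x \<in> star_hypercenter A \<and> x \<star> z \<in> star_hypercenter A"
          using z by (simp add: Z_l Z_r star_hypercenter.base)
      qed
    qed
  qed
qed

end
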